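(* Let $\gamma$ be a gauge on $\mathbb{R}^d$ with skewness $\sigma$, and let $v\in\mathbb{R}^d$ with $\gamma(v)=1$. Then $v\in \mathrm{SD}_\gamma$ if and only if $-\frac{1}{\sigma}\,\partial\gamma(v)\subseteq\partial\gamma(-v)$.
   Context: A gauge $\gamma$ on $\mathbb{R}^d$ is the Minkowski functional of a convex compact set $B_\gamma=\{x:\gamma(x)\le 1\}$ having the origin in its interior; it is positive except at $0$, positively homogeneous, and subadditive, but not necessarily symmetric. The dual gauge is $\gamma^\circ(p)=\max\{\langle p,x\rangle:\gamma(x)=1\}$, with unit ball $B_{\gamma^\circ}$ and boundary $\partial B_{\gamma^\circ}=\{p:\gamma^\circ(p)=1\}$. For $x\neq 0$, the subdifferential is $\partial\gamma(x)=\{p\in\partial B_{\gamma^\circ}:\langle p,x\rangle=\gamma(x)\}$ (and $\partial\gamma(0)=B_{\gamma^\circ}$). The skewness of $\gamma$ is $\sigma=\sup_{x\neq 0}\gamma(x)/\gamma(-x)$ (so $\sigma\ge 1$, with equality iff $\gamma$ is a norm). The set of skewness directions is $\mathrm{SD}_\gamma=\{v\in\mathbb{R}^d:\gamma(v)=\sigma\,\gamma(-v)=1\}$. *)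

theory Defs
  imports "HOL-Analysis.Analysis"
begin

definition minkowski_functional :: "'a::euclidean_space set \<Rightarrow> 'a \<Rightarrow> real" where
  "minkowski_functional B x = Inf {t. t > 0 \<and> x \<in> (\<lambda>y. t *\<^sub>R y) ` B}"

definition is_gauge :: "('a::euclidean_space \<Rightarrow> real) \<Rightarrow> bool" where
  "is_gauge g \<longleftrightarrow> (\<exists>B. convex B \<and> compact B \<and> 0 \<in> interior B \<and> g = minkowski_functional B)"

definition dual_gauge :: "('a::euclidean_space \<Rightarrow> real) \<Rightarrow> 'a \<Rightarrow> real" where
  "dual_gauge g p = Sup {p \<bullet> x | x. g x = 1}"

definition gauge_subdiff :: "('a::euclidean_space \<Rightarrow> real) \<Rightarrow> 'a \<Rightarrow> 'a set" where
  "gauge_subdiff g x =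
     (if x = 0 then {p. dual_gauge g p \<le> 1}
      else {p. dual_gauge g p = 1 \<and> p \<bullet> x = g x})"

definition skewness :: "('a::euclidean_space \<Rightarrow> real) \<Rightarrow> real" where
  "skewness g = Sup {g x / g (- x) | x. x \<noteq> 0}"

definition skew_dirs :: "('a::euclidean_space \<Rightarrow> real) \<Rightarrow> 'a set" where
  "skew_dirs g = {v. g v = skewness g * g (- v) \<and> skewness g * g (- v) = 1}"

end

theory Submission
  imports Defs
begin

locale mg =
  fixes B :: "'a::euclidean_space set" and g :: "'a \<Rightarrow> real"
  assumes cvx: "convex B" and cpt: "compact B" and int0: "0 \<in> interior B"
    and gdef: "g = minkowski_functional B"
begin

definition SS :: "'a \<Rightarrow> real set" where
  "SS x = {t. t > 0 \<and> x \<in> (\<lambda>y. t *\<^sub>R y) ` B}"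

lemma g_SS: "g x = Inf (SS x)"
  by (simp add: gdef minkowski_functional_def SS_def)

lemma img_iff: "t > 0 \<Longrightarrow> x \<in> (\<lambda>y. t *\<^sub>R y) ` B \<longleftrightarrow> (1/t) *\<^sub>R x \<in> B"
proof
  assume "t > 0" "x \<in> (\<lambda>y. t *\<^sub>R y) ` B"
  then show "(1/t) *\<^sub>R x \<in> B" by auto
next
  assume "t > 0" "(1/t) *\<^sub>R x \<in> B"
  then have "x = t *\<^sub>R ((1/t) *\<^sub>R x)" by simp
  then show "x \<in> (\<lambda>y. t *\<^sub>R y) ` B" using \<open>(1/t) *\<^sub>R x \<in> B\<close> by blast
qed

lemma SS_iff: "t \<in> SS x \<longleftrightarrow> t > 0 \<and> (1/t) *\<^sub>R x \<in> B"
  using img_iff SS_def by auto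

lemma rball: obtains r where "r > 0" "cball 0 r \<subseteq> B"
  using int0 mem_interior_cball by blast

lemma Rbound: obtains R where "R > 0" "\<And>x. x \<in> B \<Longrightarrow> norm x \<le> R"
proof -
  obtain R where "\<And>x. x \<in> B \<Longrightarrow> norm x \<le> R"
    using compact_imp_bounded[OF cpt] bounded_iff by blast
  then show ?thesis using that[of "max R 1"] by force
qed

lemma SS_ne: "SS x \<noteq> {}"
proof -
  obtain r where r: "r > 0" "cball 0 r \<subseteq> B" by (rule rball)
  define t where "t = norm x / r + 1"
  have t: "t > 0" using r by (simp add: t_def add_nonneg_pos)
  have "norm ((1/t) *\<^sub>R x) = norm x / t" using t by simp
  also have "\<dots> \<le> r"
  proof -
    have "norm x \<le> r * t" using r by (simp add: t_def algebra_simps)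
    then show ?thesis using t by (simp add: divide_le_eq)
  qed
  finally have "(1/t) *\<^sub>R x \<in> B" using r by auto
  then show ?thesis using t SS_iff by blast
qed

lemma SS_bdd: "bdd_below (SS x)"
  by (rule bdd_belowI[of _ 0]) (auto simp: SS_def)

lemma g_nonneg: "g x \<ge> 0"
  unfolding g_SS by (rule cInf_greatest[OF SS_ne]) (auto simp: SS_def)

lemma SS_up: assumes "s \<in> SS x" "s \<le> s'" shows "s' \<in> SS x"
proof -
  have s: "s > 0" "(1/s) *\<^sub>R x \<in> B" using assms SS_iff by auto
  have "(s/s') *\<^sub>R ((1/s) *\<^sub>R x) + (1 - s/s') *\<^sub>R 0 \<in> B"
    apply (rule convexD[OF cvx s(2)])
    using s assms int0 interior_subset by (auto simp: field_simps)
  moreover have "(s/s') *\<^sub>R ((1/s) *\<^sub>R x) + (1 - s/s') *\<^sub>R 0 = (1/s') *\<^sub>R x"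
    using s by simp
  ultimately show ?thesis using s assms SS_iff by auto
qed

lemma char: assumes "t > 0" shows "(1/t) *\<^sub>R x \<in> B \<longleftrightarrow> g x \<le> t"
proof
  assume "(1/t) *\<^sub>R x \<in> B"
  then have "t \<in> SS x" using assms SS_iff by auto
  then show "g x \<le> t" unfolding g_SS by (rule cInf_lower[OF _ SS_bdd])
next
  assume gt: "g x \<le> t"
  have mem: "(1/s) *\<^sub>R x \<in> B" if "s > t" for s
  proof -
    have "Inf (SS x) < s" using gt that g_SS by simp
    then obtain u where "u \<in> SS x" "u < s" using cInf_less_iff[OF SS_ne SS_bdd] by blast
    then have "s \<in> SS x" using SS_up by simp
    then show ?thesis using SS_iff by auto
  qed
  have lim: "(\<lambda>n. (1 / (t + 1 / real (Suc n))) *\<^sub>R x) \<longlonglongrightarrow> (1/t) *\<^sub>R x"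
  proof -
    have "(\<lambda>n. 1 / real (Suc n)) \<longlonglongrightarrow> 0"
      using lim_inverse_n' LIMSEQ_Suc by blast
    then have "(\<lambda>n. t + 1 / real (Suc n)) \<longlonglongrightarrow> t + 0"
      by (intro tendsto_add tendsto_const)
    then have "(\<lambda>n. 1 / (t + 1 / real (Suc n))) \<longlonglongrightarrow> 1 / t"
      using assms by (intro tendsto_divide tendsto_const) auto
    then show ?thesis by (intro tendsto_scaleR tendsto_const)
  qed
  show "(1/t) *\<^sub>R x \<in> B"
    apply (rule closed_sequentially[OF compact_imp_closed[OF cpt] _ lim])
    apply (rule mem) by simp
qed

lemma in_B_iff: "x \<in> B \<longleftrightarrow> g x \<le> 1"
  using char[of 1] by simp

lemma homog: assumes "c > 0" shows "g (c *\<^sub>R x) = c * g x"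
proof -
  have eq: "g (c *\<^sub>R x) \<le> c * t \<longleftrightarrow> g x \<le> t" if "t > 0" for t
  proof -
    have "g (c *\<^sub>R x) \<le> c * t \<longleftrightarrow> (1/(c*t)) *\<^sub>R (c *\<^sub>R x) \<in> B"
      using char[of "c*t" "c *\<^sub>R x"] that assms by simp
    also have "(1/(c*t)) *\<^sub>R (c *\<^sub>R x) = (1/t) *\<^sub>R x" using assms by simp
    finally show ?thesis using char[OF that] by simp
  qed
  have a: "g (c *\<^sub>R x) / c \<ge> 0" using g_nonneg assms by simp
  have b: "g x \<ge> 0" by (rule g_nonneg)
  have eq2: "g (c *\<^sub>R x) / c \<le> t \<longleftrightarrow> g x \<le> t" if "t > 0" for t
    using eq[OF that] assms by (simp add: divide_le_eq mult.commute)
  show ?thesis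
  proof (rule ccontr)
    assume ne: "g (c *\<^sub>R x) \<noteq> c * g x"
    then have "g (c *\<^sub>R x) / c \<noteq> g x" using assms by (auto simp: field_simps)
    define aa where "aa = g (c *\<^sub>R x) / c"
    have a0: "aa \<ge> 0" using a aa_def by simp
    have e2: "\<And>t. t > 0 \<Longrightarrow> aa \<le> t \<longleftrightarrow> g x \<le> t" using eq2 aa_def by simp
    have "aa \<noteq> g x" using \<open>g (c *\<^sub>R x) / c \<noteq> g x\<close> aa_def by simp
    then consider "aa < g x" | "g x < aa" by linarith
    then show False
    proof cases
      case 1
      have "(aa + g x)/2 > 0" "aa \<le> (aa + g x)/2" "\<not> g x \<le> (aa + g x)/2"
        using 1 a0 by (simp_all add: field_simps)
      then show False using e2[of "(aa + g x)/2"] by blast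
    next
      case 2
      have "(aa + g x)/2 > 0" "g x \<le> (aa + g x)/2" "\<not> aa \<le> (aa + g x)/2"
        using 2 b by (simp_all add: field_simps)
      then show False using e2[of "(aa + g x)/2"] by blast
    qed
  qed
qed

lemma g_lower: obtains R where "R > 0" "\<And>x. norm x \<le> R * g x"
proof -
  obtain R where R: "R > 0" "\<And>x. x \<in> B \<Longrightarrow> norm x \<le> R" using Rbound by blast
  have t: "norm x \<le> R * t" if "t > 0" "g x \<le> t" for x t
  proof -
    have "(1/t) *\<^sub>R x \<in> B" using char that by blast
    then have "norm ((1/t) *\<^sub>R x) \<le> R" using R by blast
    then have "norm x / t \<le> R" using that by simp
    then show ?thesis using that by (simp add: divide_le_eq mult.commute)
  qed
  have "norm x \<le> R * g x" for x
  proof (cases "g x > 0")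
    case True then show ?thesis using t by simp
  next
    case False
    then have g0: "g x = 0" using g_nonneg[of x] by simp
    show ?thesis
    proof (rule ccontr)
      assume "\<not> norm x \<le> R * g x"
      then have nx: "norm x > 0" using g0 by simp
      have "norm x \<le> R * (norm x / (2*R))" using t[of "norm x / (2*R)" x] g0 nx R by simp
      also have "\<dots> = norm x / 2" using R by simp
      finally show False using nx by simp
    qed
  qed
  then show ?thesis using that R by blast
qed

lemma g_upper: obtains r where "r > 0" "\<And>x. x \<noteq> 0 \<Longrightarrow> g x * r \<le> norm x"
proof -
  obtain r where r: "r > 0" "cball 0 r \<subseteq> B" by (rule rball)
  have "g x * r \<le> norm x" if "x \<noteq> 0" for x
  proof -
    define t where "t = norm x / r"
    have t: "t > 0" using that r by (simp add: t_def)
    have "norm ((1/t) *\<^sub>R x) = r" using that r by (simp add: t_def)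
    then have "(1/t) *\<^sub>R x \<in> B" using r by auto
    then have "g x \<le> t" using char t by blast
    then show ?thesis using r by (simp add: t_def le_divide_eq)
  qed
  then show ?thesis using that r by blast
qed

lemma g_pos: "x \<noteq> 0 \<Longrightarrow> g x > 0"
proof -
  assume "x \<noteq> 0"
  obtain R where R: "R > 0" "\<And>x. norm x \<le> R * g x" using g_lower by blast
  have "0 < norm x" using \<open>x \<noteq> 0\<close> by simp
  also have "\<dots> \<le> R * g x" by (rule R(2))
  finally show ?thesis using R(1) by (simp add: zero_less_mult_iff)
qed

lemma g_zero: "g 0 = 0"
  using homog[of 2 0] by simp

lemma bdd_skew: "bdd_above {g x / g (- x) | x. x \<noteq> 0}"
proof -
  obtain R where R: "R > 0" "\<And>x. norm x \<le> R * g x" using g_lower by blast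
  obtain r where r: "r > 0" "\<And>x. x \<noteq> 0 \<Longrightarrow> g x * r \<le> norm x" using g_upper by blast
  have "g x / g (- x) \<le> R / r" if "x \<noteq> 0" for x
  proof -
    have p: "g (- x) > 0" using g_pos that by simp
    have "g x * r \<le> R * g (- x)" using r(2)[OF that] R(2)[of "- x"] by simp
    then show ?thesis using p r(1) by (simp add: divide_le_eq le_divide_eq mult.commute)
  qed
  then show ?thesis by (intro bdd_aboveI[of _ "R/r"]) auto
qed

lemma skew_le: assumes "x \<noteq> 0" shows "g x \<le> skewness g * g (- x)"
proof -
  have "g x / g (- x) \<le> skewness g"
    unfolding skewness_def by (rule cSup_upper[OF _ bdd_skew]) (use assms in auto)
  moreover have "g (- x) > 0" using g_pos assms by simp
  ultimately show ?thesis by (simp add: divide_le_eq mult.commute)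
qed

lemma skew_pos: fixes x :: 'a assumes "x \<noteq> 0" shows "skewness g > 0"
proof -
  have "0 < g x" using g_pos assms by simp
  also have "\<dots> \<le> skewness g * g (- x)" by (rule skew_le[OF assms])
  finally show ?thesis using g_nonneg[of "- x"] by (simp add: zero_less_mult_iff)
qed

lemma bdd_dual: "bdd_above {p \<bullet> x | x. g x = 1}"
proof -
  obtain R where R: "R > 0" "\<And>x. x \<in> B \<Longrightarrow> norm x \<le> R" using Rbound by blast
  have "p \<bullet> x \<le> norm p * R" if "g x = 1" for x
  proof -
    have "x \<in> B" using that in_B_iff by simp
    then have "norm x \<le> R" using R by blast
    have "p \<bullet> x \<le> norm p * norm x" using norm_cauchy_schwarz by blast
    also have "\<dots> \<le> norm p * R" using \<open>norm x \<le> R\<close> by (simp add: mult_left_mono)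
    finally show ?thesis .
  qed
  then show ?thesis by (intro bdd_aboveI[of _ "norm p * R"]) auto
qed

lemma dual_le: assumes "dual_gauge g p = 1" "y \<noteq> 0" shows "p \<bullet> y \<le> g y"
proof -
  have gy: "g y > 0" using g_pos assms by simp
  define y' where "y' = (1 / g y) *\<^sub>R y"
  have "g y' = 1" using homog[of "1 / g y" y] gy by (simp add: y'_def)
  then have "p \<bullet> y' \<in> {p \<bullet> x | x. g x = 1}" by blast
  then have "p \<bullet> y' \<le> dual_gauge g p"
    unfolding dual_gauge_def by (rule cSup_upper[OF _ bdd_dual])
  then have "p \<bullet> y' \<le> 1" using assms by simp
  moreover have "p \<bullet> y = g y * (p \<bullet> y')" using gy by (simp add: y'_def)
  ultimately show ?thesis using gy by (simp add: mult_left_le)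
qed

lemma support: assumes "g v = 1" obtains p where "dual_gauge g p = 1" "p \<bullet> v = 1"
proof -
  have vB: "v \<in> B" using assms in_B_iff by simp
  have v0: "v \<noteq> 0" using assms g_zero by auto
  have vni: "v \<notin> interior B"
  proof
    assume "v \<in> interior B"
    then obtain e where e: "e > 0" "cball v e \<subseteq> B" using mem_interior_cball by blast
    define c where "c = 1 + e / norm v"
    have c: "c > 1" using e v0 by (simp add: c_def)
    have "dist v (c *\<^sub>R v) = e"
    proof -
      have "v - c *\<^sub>R v = - ((e / norm v) *\<^sub>R v)" by (simp add: c_def algebra_simps)
      then have "dist v (c *\<^sub>R v) = (e / norm v) * norm v" using e by (simp add: dist_norm)
      then show ?thesis using v0 by simp
    qed
    then have "c *\<^sub>R v \<in> B" using e by auto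
    then have "g (c *\<^sub>R v) \<le> 1" using in_B_iff by simp
    moreover have "g (c *\<^sub>R v) = c" using homog[of c v] c assms by simp
    ultimately show False using c by simp
  qed
  have cl: "closure B = B" using compact_imp_closed[OF cpt] by simp
  have ri: "rel_interior B = interior B" using int0 rel_interior_nonempty_interior by blast
  obtain a where a: "a \<noteq> 0" "\<And>y. y \<in> closure B \<Longrightarrow> a \<bullet> v \<le> a \<bullet> y"
      "\<And>y. y \<in> rel_interior B \<Longrightarrow> a \<bullet> v < a \<bullet> y"
    using supporting_hyperplane_relative_frontier[OF cvx, of v] vB vni cl ri by auto
  have av: "a \<bullet> v < 0" using a(3)[of 0] int0 ri by simp
  define p where "p = (1 / (a \<bullet> v)) *\<^sub>R a"
  have pv: "p \<bullet> v = 1" using av by (simp add: p_def)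
  have pB: "p \<bullet> y \<le> 1" if "y \<in> B" for y
  proof -
    have "a \<bullet> v \<le> a \<bullet> y" using a(2) cl that by simp
    then have "(a \<bullet> y) / (a \<bullet> v) \<le> 1" using av by (simp add: divide_le_eq)
    then show ?thesis by (simp add: p_def)
  qed
  have "dual_gauge g p = 1"
    unfolding dual_gauge_def
  proof (rule cSup_eq_maximum)
    show "1 \<in> {p \<bullet> x |x. g x = 1}" using pv assms by force
    show "\<And>z. z \<in> {p \<bullet> x |x. g x = 1} \<Longrightarrow> z \<le> 1" using pB in_B_iff by force
  qed
  then show ?thesis using that pv by blast
qed

lemma main: assumes gv: "g v = 1"
  shows "v \<in> skew_dirs g \<longleftrightarrow>
    (\<lambda>p. (- (1 / skewness g)) *\<^sub>R p) ` gauge_subdiff g v \<subseteq> gauge_subdiff g (- v)"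
proof -
  have v0: "v \<noteq> 0" using gv g_zero by auto
  have mv0: "- v \<noteq> 0" using v0 by simp
  define \<sigma> where "\<sigma> = skewness g"
  have sp: "\<sigma> > 0" using skew_pos[OF v0] by (simp add: \<sigma>_def)
  have sub_v: "gauge_subdiff g v = {p. dual_gauge g p = 1 \<and> p \<bullet> v = 1}"
    using v0 gv by (simp add: gauge_subdiff_def)
  have sub_mv: "gauge_subdiff g (- v) = {p. dual_gauge g p = 1 \<and> p \<bullet> (- v) = g (- v)}"
    using mv0 by (simp add: gauge_subdiff_def)
  show ?thesis
  proof
    assume "v \<in> skew_dirs g"
    then have s1: "\<sigma> * g (- v) = 1" by (simp add: skew_dirs_def \<sigma>_def)
    then have gmv: "g (- v) = 1 / \<sigma>" using sp by (simp add: field_simps)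
    show "(\<lambda>p. (- (1 / skewness g)) *\<^sub>R p) ` gauge_subdiff g v \<subseteq> gauge_subdiff g (- v)"
    proof
      fix q assume "q \<in> (\<lambda>p. (- (1 / skewness g)) *\<^sub>R p) ` gauge_subdiff g v"
      then obtain p where p: "dual_gauge g p = 1" "p \<bullet> v = 1" and q: "q = (- (1 / \<sigma>)) *\<^sub>R p"
        using sub_v \<sigma>_def by auto
      have qv: "q \<bullet> (- v) = g (- v)" using p gmv by (simp add: q)
      have "dual_gauge g q = 1"
        unfolding dual_gauge_def
      proof (rule cSup_eq_maximum)
        have "g (\<sigma> *\<^sub>R (- v)) = 1" using homog[OF sp, of "- v"] s1 by simp
        moreover have "q \<bullet> (\<sigma> *\<^sub>R (- v)) = 1" using sp p by (simp add: q)
        ultimately show "1 \<in> {q \<bullet> x |x. g x = 1}" by force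
        show "z \<le> 1" if zin: "z \<in> {q \<bullet> x |x. g x = 1}" for z
        proof -
          obtain x where x: "z = q \<bullet> x" "g x = 1" using zin by blast
          have x0: "x \<noteq> 0" using x g_zero by auto
          have "p \<bullet> (- x) \<le> g (- x)" using dual_le[OF p(1), of "- x"] x0 by simp
          also have "\<dots> \<le> \<sigma> * g (- (- x))" using skew_le[of "- x"] x0 by (simp add: \<sigma>_def)
          finally have "p \<bullet> (- x) \<le> \<sigma>" using x by simp
          then have "(1/\<sigma>) * (p \<bullet> (- x)) \<le> 1" using sp by (simp add: field_simps)
          then show ?thesis using x by (simp add: q)
        qed
      qed
      then show "q \<in> gauge_subdiff g (- v)" using sub_mv qv by simp
    qed
  next
    assume incl: "(\<lambda>p. (- (1 / skewness g)) *\<^sub>R p) ` gauge_subdiff g v \<subseteq> gauge_subdiff g (- v)"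
    obtain p where p: "dual_gauge g p = 1" "p \<bullet> v = 1" using support[OF gv] by blast
    have "p \<in> gauge_subdiff g v" using sub_v p by simp
    then have "(- (1 / \<sigma>)) *\<^sub>R p \<in> gauge_subdiff g (- v)" using incl \<sigma>_def by blast
    then have "((- (1 / \<sigma>)) *\<^sub>R p) \<bullet> (- v) = g (- v)" using sub_mv by simp
    then have "g (- v) = 1 / \<sigma>" using p by simp
    then have "\<sigma> * g (- v) = 1" using sp by simp
    then show "v \<in> skew_dirs g" using gv by (simp add: skew_dirs_def \<sigma>_def)
  qed
qed

end

theorem mainTheorem1:
  fixes g :: "'a::euclidean_space \<Rightarrow> real" and v :: 'a
  assumes "is_gauge g"
    and "g v = 1"
  shows "v \<in> skew_dirs g \<longleftrightarrow>
    (\<lambda>p. (- (1 / skewness g)) *\<^sub>R p) ` gauge_subdiff g v \<subseteq> gauge_subdiff g (- v)"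
proof -
  obtain B where B: "convex B" "compact B" "0 \<in> interior B" "g = minkowski_functional B"
    using assms(1) unfolding is_gauge_def by blast
  interpret mg B g using B by unfold_locales
  show ?thesis using main[OF assms(2)] .
qed

end
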